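(* Let $S$ be a memory system satisfying the Causality assumption. For all $n,m,v\ge1$: every unambiguous trace of $S(n,m,v)$ is sequentially consistent if and only if there is a witness $\Omega$ for $S(n,m,v)$ such that the graph $G(\Omega)(\tau)$ is acyclic for every unambiguous trace $\tau$ of $S(n,m,v)$.
   Context: Notation: $\mathbb{N}_n=\{1,\dots,n\}$, $\mathbb{W}_n=\{0,\dots,n\}$. Memory events $E(n,m,v)=\{R,W\}\times\mathbb{N}_n\times\mathbb{N}_m\times\mathbb{W}_v$; for $e=\langle a,b,c,d\rangle$, $op(e)=a$, $proc(e)=b$, $loc(e)=c$, $data(e)=d$; $0$ models the initial value of every location. A memory system is a family $S=(S(n,m,v))_{n,m,v\ge1}$, $S(n,m,v)$ a regular set of finite runs over an alphabet $E^a(n,m,v)\supseteq E(n,m,v)$ (other letters are internal events). The trace of a run is its subsequence of memory events; traces of $S(n,m,v)$ are traces of its runs. For a sequence $\tau$ of memory events with positions $1,\dots,|\tau|$: $P(\tau,i)=\{k: proc(\tau(k))=i\}$, $L(\tau,j)=\{k: loc(\tau(k))=j\}$, $L^w(\tau,j)=\{k\in L(\tau,j): op(\tau(k))=W\}$, $L^r(\tau,j)=\{k\in L(\tau,j): op(\tau(k))=R\}$. A trace $\tau$ is unambiguous if for every location $j$ and $x\in L^w(\tau,j)$, $data(\tau(x))\ne0$ and $data(\tau(x))\ne data(\tau(y))$ for all $y\in L^w(\tau,j)\setminus\{x\}$. Causality assumption: for all $n,m,v\ge1$, every trace $\tau$ of $S(n,m,v)$, every location $j$ and every $x\in L^r(\tau,j)$,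 either $data(\tau(x))=0$ or there is $y\in L^w(\tau,j)$ with $data(\tau(x))=data(\tau(y))$. Sequential consistency: $\tau$ is serial if for every position $u$, with $upto(\tau,u)=\{k\le u: op(\tau(k))=W,\ loc(\tau(k))=loc(\tau(u))\}$, $data(\tau(u))=0$ when $upto(\tau,u)=\emptyset$ and $data(\tau(u))=data(\tau(\max upto(\tau,u)))$ otherwise. $M(\tau,i)=\{\langle u,v\rangle: u,v\in P(\tau,i), u<v\}$. $\tau$ is sequentially consistent if some permutation $f$ of $\mathbb{N}_{|\tau|}$ satisfies (C1) $\langle u,v\rangle\in M(\tau,i)$ for some $i$ implies $f(u)<f(v)$, and (C2) $\tau_{f^{-1}(1)}\cdots\tau_{f^{-1}(|\tau|)}$ is serial. A witness $\Omega$ for $S(n,m,v)$ assigns to every trace $\tau$ of $S(n,m,v)$ and location $j$ a strict total order $\Omega(\tau,j)$ on $L^w(\tau,j)$. For unambiguous $\tau$, $\Omega^e(\tau,j)\subseteq L(\tau,j)^2$: $\langle x,y\rangle\in\Omega^e(\tau,j)$ iff (1) $data(\tau(x))=data(\tau(y))$, $op(\tau(x))=W$, $op(\tau(y))=R$; or (2) $data(\tau(x))=0$ and $data(\tau(y))\ne0$; or (3) there are $a,b\in L^w(\tau,j)$ with $\langle a,b\rangle\in\Omega(\tau,j)$, $data(\tau(a))=data(\tau(x))$, $data(\tau(b))=data(\tau(y))$. The constraint graph $G(\Omega)(\tau)$ is the directed graph with vertex set $\{1,\dots,|\tau|\}$ and edge set $\bigcup_{1\le i\le n}M(\tau,i)\cup\bigcup_{1\le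 j\le m}\Omega^e(\tau,j)$. *)

theory Defs
  imports Main
begin

datatype mop = R | W

type_synonym event = "mop \<times> nat \<times> nat \<times> nat"

definition ev_op :: "event \<Rightarrow> mop" where "ev_op e = fst e"
definition ev_proc :: "event \<Rightarrow> nat" where "ev_proc e = fst (snd e)"
definition ev_loc :: "event \<Rightarrow> nat" where "ev_loc e = fst (snd (snd e))"
definition ev_data :: "event \<Rightarrow> nat" where "ev_data e = snd (snd (snd e))"

definition events :: "nat \<Rightarrow> nat \<Rightarrow> nat \<Rightarrow> event set" where
  "events n m v = UNIV \<times> {1..n} \<times> {1..m} \<times> {0..v}"

datatype 'i letter = Mem event | Internal 'i

definition regular_over :: "'a set \<Rightarrow> 'a list set \<Rightarrow> bool" where
  "regular_over A L \<longleftrightarrow> finite A \<and>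
     (\<exists>(Q :: nat set) q0 (\<delta> :: nat \<Rightarrow> 'a \<Rightarrow> nat) F.
        finite Q \<and> q0 \<in> Q \<and> (\<forall>q\<in>Q. \<forall>a\<in>A. \<delta> q a \<in> Q) \<and> F \<subseteq> Q \<and>
        L = {w. set w \<subseteq> A \<and> foldl \<delta> q0 w \<in> F})"

text \<open>A memory system: for all \<open>n,m,v \<ge> 1\<close>, \<open>S n m v\<close> is a regular set of finite runs over
  an alphabet \<open>E^a(n,m,v) \<supseteq> E(n,m,v)\<close> (the extra letters being internal events).\<close>
definition memory_system :: "(nat \<Rightarrow> nat \<Rightarrow> nat \<Rightarrow> 'i letter list set) \<Rightarrow> bool" where
  "memory_system S \<longleftrightarrow> (\<forall>n m v. n \<ge> 1 \<longrightarrow> m \<ge> 1 \<longrightarrow> v \<ge> 1 \<longrightarrow>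
     (\<exists>Ia. regular_over (Mem ` events n m v \<union> Internal ` Ia) (S n m v)))"

fun trace :: "'i letter list \<Rightarrow> event list" where
  "trace [] = []"
| "trace (Mem e # r) = e # trace r"
| "trace (Internal _ # r) = trace r"

definition traces :: "'i letter list set \<Rightarrow> event list set" where
  "traces Runs = trace ` Runs"

section \<open>Positions (0-based: positions of \<open>\<tau>\<close> are \<open>0..<length \<tau>\<close>)\<close>

definition Pset :: "event list \<Rightarrow> nat \<Rightarrow> nat set" where
  "Pset \<tau> i = {k. k < length \<tau> \<and> ev_proc (\<tau> ! k) = i}"

definition Lset :: "event list \<Rightarrow> nat \<Rightarrow> nat set" where
  "Lset \<tau> j = {k. k < length \<tau> \<and> ev_loc (\<tau> ! k) = j}"

definition Lw :: "event list \<Rightarrow> nat \<Rightarrow> nat set" where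
  "Lw \<tau> j = {k \<in> Lset \<tau> j. ev_op (\<tau> ! k) = W}"

definition Lr :: "event list \<Rightarrow> nat \<Rightarrow> nat set" where
  "Lr \<tau> j = {k \<in> Lset \<tau> j. ev_op (\<tau> ! k) = R}"

definition unambiguous :: "event list \<Rightarrow> bool" where
  "unambiguous \<tau> \<longleftrightarrow> (\<forall>j. \<forall>x\<in>Lw \<tau> j. ev_data (\<tau> ! x) \<noteq> 0 \<and>
      (\<forall>y\<in>Lw \<tau> j - {x}. ev_data (\<tau> ! x) \<noteq> ev_data (\<tau> ! y)))"

definition causality :: "(nat \<Rightarrow> nat \<Rightarrow> nat \<Rightarrow> 'i letter list set) \<Rightarrow> bool" where
  "causality S \<longleftrightarrow> (\<forall>n m v. n \<ge> 1 \<longrightarrow> m \<ge> 1 \<longrightarrow> v \<ge> 1 \<longrightarrow>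
     (\<forall>\<tau>\<in>traces (S n m v). \<forall>j. \<forall>x\<in>Lr \<tau> j.
        ev_data (\<tau> ! x) = 0 \<or> (\<exists>y\<in>Lw \<tau> j. ev_data (\<tau> ! x) = ev_data (\<tau> ! y))))"

definition upto_w :: "event list \<Rightarrow> nat \<Rightarrow> nat set" where
  "upto_w \<tau> u = {k. k \<le> u \<and> ev_op (\<tau> ! k) = W \<and> ev_loc (\<tau> ! k) = ev_loc (\<tau> ! u)}"

definition serial :: "event list \<Rightarrow> bool" where
  "serial \<tau> \<longleftrightarrow> (\<forall>u < length \<tau>.
     (if upto_w \<tau> u = {} then ev_data (\<tau> ! u) = 0
      else ev_data (\<tau> ! u) = ev_data (\<tau> ! Max (upto_w \<tau> u))))"

definition Mrel :: "event list \<Rightarrow> nat \<Rightarrow> (nat \<times> nat) set" where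
  "Mrel \<tau> i = {(u, w). u \<in> Pset \<tau> i \<and> w \<in> Pset \<tau> i \<and> u < w}"

text \<open>\<open>f\<close> is a permutation of the positions; the permuted sequence has at position \<open>p\<close>
  the event \<open>\<tau>(f\<^sup>-\<^sup>1(p))\<close>.\<close>
definition seq_consistent :: "event list \<Rightarrow> bool" where
  "seq_consistent \<tau> \<longleftrightarrow> (\<exists>f. bij_betw f {..<length \<tau>} {..<length \<tau>} \<and>
     (\<forall>i u w. (u, w) \<in> Mrel \<tau> i \<longrightarrow> f u < f w) \<and>
     serial (map (\<lambda>p. \<tau> ! the_inv_into {..<length \<tau>} f p) [0..<length \<tau>]))"

definition strict_total_on :: "'a set \<Rightarrow> ('a \<times> 'a) set \<Rightarrow> bool" where
  "strict_total_on A r \<longleftrightarrow> r \<subseteq> A \<times> A \<and> irrefl r \<and> trans r \<and>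
     (\<forall>x\<in>A. \<forall>y\<in>A. x \<noteq> y \<longrightarrow> (x, y) \<in> r \<or> (y, x) \<in> r)"

definition witness :: "'i letter list set \<Rightarrow> (event list \<Rightarrow> nat \<Rightarrow> (nat \<times> nat) set) \<Rightarrow> bool" where
  "witness Runs \<Omega> \<longleftrightarrow> (\<forall>\<tau>\<in>traces Runs. \<forall>j. strict_total_on (Lw \<tau> j) (\<Omega> \<tau> j))"

definition Omega_e :: "(event list \<Rightarrow> nat \<Rightarrow> (nat \<times> nat) set) \<Rightarrow> event list \<Rightarrow> nat \<Rightarrow> (nat \<times> nat) set" where
  "Omega_e \<Omega> \<tau> j = {(x, y). x \<in> Lset \<tau> j \<and> y \<in> Lset \<tau> j \<and>
     ((ev_data (\<tau> ! x) = ev_data (\<tau> ! y) \<and> ev_op (\<tau> ! x) = W \<and> ev_op (\<tau> ! y) = R)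
      \<or> (ev_data (\<tau> ! x) = 0 \<and> ev_data (\<tau> ! y) \<noteq> 0)
      \<or> (\<exists>a\<in>Lw \<tau> j. \<exists>b\<in>Lw \<tau> j. (a, b) \<in> \<Omega> \<tau> j \<and>
            ev_data (\<tau> ! a) = ev_data (\<tau> ! x) \<and> ev_data (\<tau> ! b) = ev_data (\<tau> ! y)))}"

text \<open>Edge set of the constraint graph \<open>G(\<Omega>)(\<tau>)\<close> for \<open>S(n,m,v)\<close>; vertices are the positions of \<open>\<tau>\<close>.\<close>
definition constraint_edges ::
  "nat \<Rightarrow> nat \<Rightarrow> (event list \<Rightarrow> nat \<Rightarrow> (nat \<times> nat) set) \<Rightarrow> event list \<Rightarrow> (nat \<times> nat) set" where
  "constraint_edges n m \<Omega> \<tau> = (\<Union>i\<in>{1..n}. Mrel \<tau> i) \<union> (\<Union>j\<in>{1..m}. Omega_e \<Omega> \<tau> j)"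

end

theory Submission imports Defs begin

lemma set_trace: "set (trace r) \<subseteq> {e. Mem e \<in> set r}"
  by (induction r rule: trace.induct) auto

lemma trace_ev:
  assumes "memory_system S" "1 \<le> n" "1 \<le> m" "1 \<le> v" "\<tau> \<in> traces (S n m v)" "k < length \<tau>"
  shows "ev_proc (\<tau>!k) \<in> {1..n} \<and> ev_loc (\<tau>!k) \<in> {1..m}"
proof -
  have "\<exists>Ia. regular_over (Mem ` events n m v \<union> Internal ` Ia) (S n m v)"
    using memory_system_def[THEN iffD1, OF assms(1), rule_format, OF assms(2-4)] .
  then obtain Ia where reg: "regular_over (Mem ` events n m v \<union> Internal ` Ia) (S n m v)"
    by (elim exE)
  have sub: "\<forall>w\<in>S n m v. set w \<subseteq> Mem ` events n m v \<union> Internal ` Ia"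
    using reg unfolding regular_over_def by (elim conjE exE) simp
  obtain r where r: "r \<in> S n m v" "\<tau> = trace r" using assms(5) unfolding traces_def by auto
  have "\<tau>!k \<in> set \<tau>" using assms(6) by simp
  then have "Mem (\<tau>!k) \<in> set r" using set_trace r by auto
  then have "\<tau>!k \<in> events n m v" using sub r by auto
  then show ?thesis unfolding events_def ev_proc_def ev_loc_def by auto
qed

lemma toposort:
  "finite A \<Longrightarrow> acyclic r \<Longrightarrow> \<exists>xs. distinct xs \<and> set xs = A \<and>
     (\<forall>i j. i < j \<longrightarrow> j < length xs \<longrightarrow> (xs!j, xs!i) \<notin> r\<^sup>+)"
proof (induction "card A" arbitrary: A)
  case 0
  then show ?case by (intro exI[of _ "[]"]) auto
next
  case (Suc k)
  have ne: "A \<noteq> {}" using Suc.hyps(2) by auto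
  then obtain a where a: "a \<in> A" by auto
  have ac: "acyclic (r\<^sup>+ \<inter> A \<times> A)"
    by (rule acyclic_subset[of "r\<^sup>+"]) (use Suc.prems(2) in \<open>auto simp: acyclic_def\<close>)
  have "finite (r\<^sup>+ \<inter> A \<times> A)" using Suc.prems(1) by (meson finite_Int finite_SigmaI)
  then have "wf (r\<^sup>+ \<inter> A \<times> A)" using ac finite_acyclic_wf by blast
  then obtain x where x: "x \<in> A" "\<forall>y. (y, x) \<in> r\<^sup>+ \<inter> A \<times> A \<longrightarrow> y \<notin> A"
    using a unfolding wf_eq_minimal by meson
  have kc: "k = card (A - {x})" using Suc.hyps(2) Suc.prems(1) x(1) by simp
  have fin: "finite (A - {x})" using Suc.prems(1) by simp
  have "\<exists>xs. distinct xs \<and> set xs = A - {x} \<and>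
     (\<forall>i j. i < j \<longrightarrow> j < length xs \<longrightarrow> (xs!j, xs!i) \<notin> r\<^sup>+)"
    by (rule Suc.hyps(1)[OF kc fin Suc.prems(2)])
  then obtain xs where xsall: "distinct xs \<and> set xs = A - {x} \<and>
     (\<forall>i j. i < j \<longrightarrow> j < length xs \<longrightarrow> (xs!j, xs!i) \<notin> r\<^sup>+)" ..
  note xs = conjunct1[OF xsall] conjunct1[OF conjunct2[OF xsall]] conjunct2[OF conjunct2[OF xsall]]
  show ?case
  proof (intro exI[of _ "x # xs"] conjI allI impI)
    show "distinct (x # xs)" using xs(1,2) by simp
    show "set (x # xs) = A" using xs(2) x(1) by auto
    fix i j assume ij: "i < j" "j < length (x # xs)"
    obtain j' where j': "j = Suc j'" using ij by (cases j) auto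
    have jl: "j' < length xs" using ij j' by simp
    show "((x # xs) ! j, (x # xs) ! i) \<notin> r\<^sup>+"
    proof (cases i)
      case 0
      have "xs ! j' \<in> set xs" using jl by (rule nth_mem)
      then have jA: "(x # xs) ! j \<in> A" using xs(2) j' by simp
      have i0: "(x # xs) ! i = x" using 0 by simp
      show ?thesis
      proof
        assume "((x # xs) ! j, (x # xs) ! i) \<in> r\<^sup>+"
        then have "((x # xs) ! j, x) \<in> r\<^sup>+ \<inter> A \<times> A" using jA i0 x(1) by simp
        from x(2)[rule_format, OF this] jA show False by contradiction
      qed
    next
      case (Suc i')
      have "i' < j'" using ij Suc j' by simp
      then have "(xs ! j', xs ! i') \<notin> r\<^sup>+" using xs(3)[rule_format, of i' j'] jl by simp
      then show ?thesis using Suc j' by simp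
    qed
  qed
qed

lemma linext:
  fixes N :: nat and r :: "(nat \<times> nat) set"
  assumes "acyclic r" "r \<subseteq> {..<N} \<times> {..<N}"
  shows "\<exists>f. bij_betw f {..<N} {..<N} \<and> (\<forall>a b. (a,b) \<in> r \<longrightarrow> f a < f b)"
proof -
  have "\<exists>xs. distinct xs \<and> set xs = {..<N} \<and>
     (\<forall>i j. i < j \<longrightarrow> j < length xs \<longrightarrow> (xs!j, xs!i) \<notin> r\<^sup>+)"
    by (rule toposort[OF finite_lessThan assms(1)])
  then obtain xs where xsall: "distinct xs \<and> set xs = {..<N} \<and>
     (\<forall>i j. i < j \<longrightarrow> j < length xs \<longrightarrow> (xs!j, xs!i) \<notin> r\<^sup>+)" ..
  note xs = conjunct1[OF xsall] conjunct1[OF conjunct2[OF xsall]] conjunct2[OF conjunct2[OF xsall]]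
  have len: "length xs = N" using distinct_card[OF xs(1)] xs(2) by simp
  define g where "g p = xs ! p" for p
  have bg: "bij_betw g {..<N} {..<N}"
  proof -
    have "inj_on g {..<N}" unfolding inj_on_def g_def using xs(1) len
      by (simp add: nth_eq_iff_index_eq)
    moreover have "g ` {..<N} = {..<N}" unfolding g_def using xs(2) len
      by (metis atLeast_upt image_set map_nth set_map)
    ultimately show ?thesis unfolding bij_betw_def by blast
  qed
  define f where "f = the_inv_into {..<N} g"
  have bf: "bij_betw f {..<N} {..<N}" unfolding f_def using bij_betw_the_inv_into[OF bg] .
  have gf: "g (f a) = a" if "a < N" for a
    unfolding f_def using bg that by (simp add: bij_betw_def f_the_inv_into_f)
  have fN: "f a < N" if "a < N" for a using bf that by (auto simp: bij_betw_def)
  show ?thesis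
  proof (intro exI[of _ f] conjI allI impI bf)
    fix a b assume ab: "(a, b) \<in> r"
    then have N: "a < N" "b < N" using assms(2) by auto
    show "f a < f b"
    proof (rule ccontr)
      assume "\<not> f a < f b"
      then consider "f b < f a" | "f a = f b" by linarith
      then show False
      proof cases
        case 1
        then have "(xs ! f a, xs ! f b) \<notin> r\<^sup>+" using xs(3)[rule_format, of "f b" "f a"] fN[OF N(1)] len by simp
        then show False using gf N ab unfolding g_def by auto
      next
        case 2
        then have "a = b" using gf N by metis
        then show False using ab assms(1) unfolding acyclic_def by auto
      qed
    qed
  qed
qed


lemma op_R: "ev_op e \<noteq> W \<Longrightarrow> ev_op e = R" by (cases "ev_op e") auto

lemma unamb_eq:
  "unambiguous \<tau> \<Longrightarrow> a \<in> Lw \<tau> j \<Longrightarrow> b \<in> Lw \<tau> j \<Longrightarrow> ev_data (\<tau>!a) = ev_data (\<tau>!b) \<Longrightarrow> a = b"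
  unfolding unambiguous_def by blast

lemma unamb_nz: "unambiguous \<tau> \<Longrightarrow> a \<in> Lw \<tau> j \<Longrightarrow> ev_data (\<tau>!a) \<noteq> 0"
  unfolding unambiguous_def by blast

lemma serial_read:
  fixes \<tau> :: "event list" and f :: "nat \<Rightarrow> nat"
  assumes bij: "bij_betw f {..<length \<tau>} {..<length \<tau>}"
    and ser: "serial (map (\<lambda>p. \<tau> ! the_inv_into {..<length \<tau>} f p) [0..<length \<tau>])"
    and un: "unambiguous \<tau>"
    and x: "x < length \<tau>" "ev_op (\<tau>!x) = R" "ev_loc (\<tau>!x) = j"
  shows "ev_data (\<tau>!x) = 0 \<Longrightarrow> \<forall>w\<in>Lw \<tau> j. f x < f w"
    and "y \<in> Lw \<tau> j \<Longrightarrow> ev_data (\<tau>!y) = ev_data (\<tau>!x) \<Longrightarrow>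
         f y < f x \<and> (\<forall>w\<in>Lw \<tau> j. f w < f x \<longrightarrow> f w \<le> f y)"
proof -
  define N where "N = length \<tau>"
  define g where "g = the_inv_into {..<N} f"
  define \<sigma> where "\<sigma> = map (\<lambda>p. \<tau> ! g p) [0..<N]"
  have inj: "inj_on f {..<N}" using bij unfolding N_def bij_betw_def by blast
  have fN: "f z < N" if "z < N" for z using bij that unfolding N_def bij_betw_def by auto
  have gf: "g (f z) = z" if "z < N" for z unfolding g_def using inj that the_inv_into_f_f by fastforce
  have gN: "g p < N" if "p < N" for p
    unfolding g_def using bij that unfolding N_def bij_betw_def
    by (metis lessThan_iff subset_refl the_inv_into_into)
  have fg: "f (g p) = p" if "p < N" for p
    unfolding g_def using bij that unfolding N_def bij_betw_def by (simp add: f_the_inv_into_f)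
  have sn: "\<sigma> ! k = \<tau> ! g k" if "k < N" for k unfolding \<sigma>_def using that by simp
  have xN: "x < N" using x N_def by simp
  have sx: "\<sigma> ! f x = \<tau> ! x" using sn fN xN gf by simp
  have U: "upto_w \<sigma> (f x) = {k. k \<le> f x \<and> g k \<in> Lw \<tau> j}"
  proof -
    have "k \<le> f x \<Longrightarrow> k < N" for k using fN xN by fastforce
    then show ?thesis unfolding upto_w_def Lw_def Lset_def using sn sx x gN
      by (auto simp: N_def)
  qed
  have serx: "if upto_w \<sigma> (f x) = {} then ev_data (\<sigma> ! f x) = 0
      else ev_data (\<sigma> ! f x) = ev_data (\<sigma> ! Max (upto_w \<sigma> (f x)))"
  proof -
    have "serial \<sigma>" using ser unfolding \<sigma>_def g_def N_def .
    moreover have "length \<sigma> = N" unfolding \<sigma>_def by simp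
    ultimately show ?thesis using fN xN unfolding serial_def by blast
  qed
  have Ufin: "finite (upto_w \<sigma> (f x))" unfolding U by (rule finite_subset[of _ "{..f x}"]) auto
  have memU: "f w \<in> upto_w \<sigma> (f x)" if "w \<in> Lw \<tau> j" "f w \<le> f x" for w
  proof -
    have "w < N" using that unfolding Lw_def Lset_def N_def by auto
    then show ?thesis unfolding U using that gf by auto
  qed
  have xnot: "x \<notin> Lw \<tau> j" using x unfolding Lw_def by auto
  show "\<forall>w\<in>Lw \<tau> j. f x < f w" if d0: "ev_data (\<tau>!x) = 0"
  proof -
    have "upto_w \<sigma> (f x) = {}"
    proof (rule ccontr)
      assume ne: "upto_w \<sigma> (f x) \<noteq> {}"
      define k where "k = Max (upto_w \<sigma> (f x))"
      have "k \<in> upto_w \<sigma> (f x)" using Max_in[OF Ufin ne] k_def by simp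
      then have k: "k \<le> f x" "g k \<in> Lw \<tau> j" unfolding U by auto
      have "ev_data (\<sigma> ! k) = 0" using serx ne d0 sx k_def by auto
      moreover have "\<sigma> ! k = \<tau> ! g k" using k fN xN sn by fastforce
      ultimately show False using unamb_nz[OF un k(2)] by simp
    qed
    then show ?thesis using memU by (metis empty_iff not_le)
  qed
  assume y: "y \<in> Lw \<tau> j" "ev_data (\<tau>!y) = ev_data (\<tau>!x)"
  have dnz: "ev_data (\<tau>!x) \<noteq> 0" using unamb_nz[OF un y(1)] y(2) by simp
  have ne: "upto_w \<sigma> (f x) \<noteq> {}" using serx dnz sx by auto
  define k where "k = Max (upto_w \<sigma> (f x))"
  have "k \<in> upto_w \<sigma> (f x)" using Max_in[OF Ufin ne] k_def by simp
  then have k: "k \<le> f x" "g k \<in> Lw \<tau> j" unfolding U by auto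
  have kN: "k < N" using k fN xN by fastforce
  have "ev_data (\<tau> ! g k) = ev_data (\<tau> ! x)" using serx ne sx k_def sn kN by auto
  then have "g k = y" using unamb_eq[OF un k(2) y(1)] y(2) by simp
  then have fy: "f y = k" using fg kN by auto
  have "y \<noteq> x" using y xnot by auto
  then have "f y \<noteq> f x" using inj y xN unfolding Lw_def Lset_def inj_on_def N_def by auto
  then have "f y < f x" using fy k by simp
  moreover have "\<forall>w\<in>Lw \<tau> j. f w < f x \<longrightarrow> f w \<le> f y"
    using memU fy k_def Max_ge[OF Ufin] by fastforce
  ultimately show "f y < f x \<and> (\<forall>w\<in>Lw \<tau> j. f w < f x \<longrightarrow> f w \<le> f y)" by blast
qed

lemma serial_from_order:
  fixes \<tau> :: "event list" and f :: "nat \<Rightarrow> nat"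
  assumes bij: "bij_betw f {..<length \<tau>} {..<length \<tau>}"
    and un: "unambiguous \<tau>"
    and caus: "\<forall>j. \<forall>x\<in>Lr \<tau> j. ev_data (\<tau>!x) = 0 \<or> (\<exists>y\<in>Lw \<tau> j. ev_data (\<tau>!x) = ev_data (\<tau>!y))"
    and tot: "\<forall>j. strict_total_on (Lw \<tau> j) (\<Omega> \<tau> j)"
    and ord: "\<And>a b. a < length \<tau> \<Longrightarrow> (a,b) \<in> Omega_e \<Omega> \<tau> (ev_loc (\<tau>!a)) \<Longrightarrow> f a < f b"
  shows "serial (map (\<lambda>p. \<tau> ! the_inv_into {..<length \<tau>} f p) [0..<length \<tau>])"
proof -
  define N where "N = length \<tau>"
  define g where "g = the_inv_into {..<N} f"
  define \<sigma> where "\<sigma> = map (\<lambda>p. \<tau> ! g p) [0..<N]"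
  have inj: "inj_on f {..<N}" using bij unfolding N_def bij_betw_def by blast
  have fN: "f z < N" if "z < N" for z using bij that unfolding N_def bij_betw_def by auto
  have gf: "g (f z) = z" if "z < N" for z unfolding g_def using inj that the_inv_into_f_f by fastforce
  have gN: "g p < N" if "p < N" for p
    unfolding g_def using bij that unfolding N_def bij_betw_def
    by (metis lessThan_iff subset_refl the_inv_into_into)
  have fg: "f (g p) = p" if "p < N" for p
    unfolding g_def using bij that unfolding N_def bij_betw_def by (simp add: f_the_inv_into_f)
  have sn: "\<sigma> ! k = \<tau> ! g k" if "k < N" for k unfolding \<sigma>_def using that by simp
  have lenS: "length \<sigma> = N" unfolding \<sigma>_def by simp
  have "serial \<sigma>" unfolding serial_def
  proof (intro allI impI)
    fix p assume "p < length \<sigma>"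
    then have pN: "p < N" using lenS by simp
    define x where "x = g p"
    define j where "j = ev_loc (\<tau> ! x)"
    have xN: "x < N" using gN pN x_def by simp
    have fx: "f x = p" using fg pN x_def by simp
    have sx: "\<sigma> ! p = \<tau> ! x" using sn pN x_def by simp
    have xL: "x \<in> Lset \<tau> j" using xN unfolding Lset_def j_def N_def by simp
    have U: "upto_w \<sigma> p = {k. k \<le> p \<and> g k \<in> Lw \<tau> j}"
    proof -
      have "k \<le> p \<Longrightarrow> k < N" for k using pN by fastforce
      then show ?thesis unfolding upto_w_def Lw_def Lset_def using sn sx gN j_def
        by (auto simp: N_def)
    qed
    have Ufin: "finite (upto_w \<sigma> p)" unfolding U by (rule finite_subset[of _ "{..p}"]) auto
    have ordj: "f a < f b" if "(a,b) \<in> Omega_e \<Omega> \<tau> j" for a b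
    proof -
      have "a \<in> Lset \<tau> j" using that unfolding Omega_e_def by auto
      then show ?thesis using ord[of a b] that unfolding Lset_def by auto
    qed
    have wN: "w < N" if "w \<in> Lw \<tau> j" for w using that unfolding Lw_def Lset_def N_def by auto
    have wL: "w \<in> Lset \<tau> j" if "w \<in> Lw \<tau> j" for w using that unfolding Lw_def by auto
    show "if upto_w \<sigma> p = {} then ev_data (\<sigma> ! p) = 0
          else ev_data (\<sigma> ! p) = ev_data (\<sigma> ! Max (upto_w \<sigma> p))"
    proof (cases "ev_op (\<tau> ! x) = W")
      case True
      then have xW: "x \<in> Lw \<tau> j" using xL unfolding Lw_def by simp
      have "p \<in> upto_w \<sigma> p" unfolding U using xW x_def by simp
      moreover have "Max (upto_w \<sigma> p) = p"
        by (rule Max_eqI[OF Ufin]) (use \<open>p \<in> upto_w \<sigma> p\<close> in \<open>auto simp: U\<close>)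
      ultimately show ?thesis by auto
    next
      case False
      then have xR: "x \<in> Lr \<tau> j" using xL op_R unfolding Lr_def by simp
      have cx: "ev_data (\<tau>!x) = 0 \<or> (\<exists>y\<in>Lw \<tau> j. ev_data (\<tau>!x) = ev_data (\<tau>!y))"
        using caus xR by blast
      from cx consider "ev_data (\<tau>!x) = 0" | y where "y \<in> Lw \<tau> j" "ev_data (\<tau>!x) = ev_data (\<tau>!y)"
        by (elim disjE bexE) auto
      then show ?thesis
      proof cases
        case 1
        have "upto_w \<sigma> p = {}"
        proof (rule ccontr)
          assume "upto_w \<sigma> p \<noteq> {}"
          then obtain k where k: "k \<le> p" "g k \<in> Lw \<tau> j" unfolding U by auto
          have "(x, g k) \<in> Omega_e \<Omega> \<tau> j"
            unfolding Omega_e_def using xL wL[OF k(2)] 1 unamb_nz[OF un k(2)] by auto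
          then have "f x < f (g k)" by (rule ordj)
          then show False using fx fg k pN by auto
        qed
        then show ?thesis using 1 sx by simp
      next
        case 2
        have "(y, x) \<in> Omega_e \<Omega> \<tau> j"
          unfolding Omega_e_def using xL wL[OF 2(1)] 2 xR unfolding Lw_def Lr_def by auto
        then have fyx: "f y < p" using ordj fx by fastforce
        have yU: "f y \<in> upto_w \<sigma> p" unfolding U using fyx gf wN[OF 2(1)] 2(1) by auto
        have "Max (upto_w \<sigma> p) = f y"
        proof (rule Max_eqI[OF Ufin _ yU])
          fix k assume "k \<in> upto_w \<sigma> p"
          then have k: "k \<le> p" "g k \<in> Lw \<tau> j" unfolding U by auto
          define w where "w = g k"
          have fw: "f w = k" using fg k pN w_def by auto
          show "k \<le> f y"
          proof (cases "w = y")
            case True then show ?thesis using fw by simp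
          next
            case False
            have st: "strict_total_on (Lw \<tau> j) (\<Omega> \<tau> j)" using tot by blast
            then consider "(w, y) \<in> \<Omega> \<tau> j" | "(y, w) \<in> \<Omega> \<tau> j"
              using False k(2) 2(1) w_def unfolding strict_total_on_def by blast
            then show ?thesis
            proof cases
              case 1
              have "(w, y) \<in> Omega_e \<Omega> \<tau> j"
                unfolding Omega_e_def using wL k(2) 2(1) 1 w_def by blast
              then show ?thesis using ordj fw by fastforce
            next
              case 3: 2
              have "(x, w) \<in> Omega_e \<Omega> \<tau> j"
                proof -
                have "w \<in> Lset \<tau> j" using wL k(2) w_def by simp
                then show ?thesis unfolding Omega_e_def using xL k(2) 2 3 w_def by force
              qed
              then have "p < k" using ordj fw fx by fastforce
              then show ?thesis using k by simp
            qed
          qed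
        qed
        moreover have "\<sigma> ! f y = \<tau> ! y"
          using sn[of "f y"] fN[OF wN[OF 2(1)]] gf[OF wN[OF 2(1)]] by simp
        ultimately show ?thesis using yU sx 2(2) by auto
      qed
    qed
  qed
  then show ?thesis unfolding \<sigma>_def g_def N_def .
qed


theorem theorem5p3:
  fixes S :: "nat \<Rightarrow> nat \<Rightarrow> nat \<Rightarrow> 'i letter list set"
    and n m v :: nat
  assumes "memory_system S"
    and "causality S"
    and "n \<ge> 1" and "m \<ge> 1" and "v \<ge> 1"
  shows "(\<forall>\<tau>\<in>traces (S n m v). unambiguous \<tau> \<longrightarrow> seq_consistent \<tau>) \<longleftrightarrow>
         (\<exists>\<Omega>. witness (S n m v) \<Omega> \<and>
              (\<forall>\<tau>\<in>traces (S n m v). unambiguous \<tau> \<longrightarrow> acyclic (constraint_edges n m \<Omega> \<tau>)))"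
proof
  have caus: "\<forall>j. \<forall>x\<in>Lr \<tau> j. ev_data (\<tau>!x) = 0 \<or> (\<exists>y\<in>Lw \<tau> j. ev_data (\<tau>!x) = ev_data (\<tau>!y))"
    if "\<tau> \<in> traces (S n m v)" for \<tau>
    using assms(2-5) that unfolding causality_def by blast
  {
  assume H: "\<forall>\<tau>\<in>traces (S n m v). unambiguous \<tau> \<longrightarrow> seq_consistent \<tau>"
  define P where "P \<tau> f \<longleftrightarrow> bij_betw f {..<length \<tau>} {..<length \<tau>} \<and>
     (\<forall>i u w. (u, w) \<in> Mrel \<tau> i \<longrightarrow> f u < f w) \<and>
     serial (map (\<lambda>p. \<tau> ! the_inv_into {..<length \<tau>} f p) [0..<length \<tau>])" for \<tau> and f :: "nat \<Rightarrow> nat"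
  define F where "F \<tau> = (if seq_consistent \<tau> then (SOME f. P \<tau> f) else id)" for \<tau>
  have FP: "P \<tau> (F \<tau>)" if "seq_consistent \<tau>" for \<tau>
    using that someI_ex[of "P \<tau>"] unfolding F_def seq_consistent_def P_def by auto
  have Finj: "inj_on (F \<tau>) {..<length \<tau>}" for \<tau>
  proof (cases "seq_consistent \<tau>")
    case True then show ?thesis using FP unfolding P_def bij_betw_def by blast
  next
    case False then show ?thesis unfolding F_def by simp
  qed
  define \<Omega> where "\<Omega> \<tau> j = {(a,b). a \<in> Lw \<tau> j \<and> b \<in> Lw \<tau> j \<and> F \<tau> a < F \<tau> b}" for \<tau> j
  have LwN: "a < length \<tau>" if "a \<in> Lw \<tau> j" for a \<tau> j using that unfolding Lw_def Lset_def by auto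
  have wit: "witness (S n m v) \<Omega>"
    unfolding witness_def strict_total_on_def
  proof (intro ballI allI conjI impI)
    fix \<tau> j
    show "\<Omega> \<tau> j \<subseteq> Lw \<tau> j \<times> Lw \<tau> j" unfolding \<Omega>_def by auto
    show "irrefl (\<Omega> \<tau> j)" unfolding \<Omega>_def irrefl_def by auto
    show "trans (\<Omega> \<tau> j)" unfolding \<Omega>_def trans_def by auto
    fix x y assume xy: "x \<in> Lw \<tau> j" "y \<in> Lw \<tau> j" "x \<noteq> y"
    then have "F \<tau> x \<noteq> F \<tau> y" using Finj[of \<tau>] LwN unfolding inj_on_def by blast
    then show "(x, y) \<in> \<Omega> \<tau> j \<or> (y, x) \<in> \<Omega> \<tau> j" using xy unfolding \<Omega>_def by auto
  qed
  have "acyclic (constraint_edges n m \<Omega> \<tau>)" if tr: "\<tau> \<in> traces (S n m v)" and un: "unambiguous \<tau>" for \<tau>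
  proof -
    define f where "f = F \<tau>"
    have Pf: "P \<tau> f" using FP H tr un f_def by blast
    have bij: "bij_betw f {..<length \<tau>} {..<length \<tau>}" and M: "\<And>i u w. (u, w) \<in> Mrel \<tau> i \<Longrightarrow> f u < f w"
      and ser: "serial (map (\<lambda>p. \<tau> ! the_inv_into {..<length \<tau>} f p) [0..<length \<tau>])"
      using Pf unfolding P_def by auto
    have inj: "inj_on f {..<length \<tau>}" using bij unfolding bij_betw_def by blast
    have injE: "f a = f b \<Longrightarrow> a < length \<tau> \<Longrightarrow> b < length \<tau> \<Longrightarrow> a = b" for a b
      using inj unfolding inj_on_def by blast
    have cs: "\<forall>j. \<forall>x\<in>Lr \<tau> j. ev_data (\<tau>!x) = 0 \<or> (\<exists>y\<in>Lw \<tau> j. ev_data (\<tau>!x) = ev_data (\<tau>!y))"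
      using caus tr by blast
    have Pz: "f a \<le> f z \<and> (\<forall>w\<in>Lw \<tau> j. f w \<le> f z \<longrightarrow> f w \<le> f a)"
      if z: "z \<in> Lset \<tau> j" and a: "a \<in> Lw \<tau> j" and d: "ev_data (\<tau>!z) = ev_data (\<tau>!a)" for z a j
    proof (cases "ev_op (\<tau>!z) = W")
      case True
      then have "z \<in> Lw \<tau> j" using z unfolding Lw_def by simp
      then have "z = a" using unamb_eq[OF un _ a d] by simp
      then show ?thesis by simp
    next
      case False
      then have zR: "ev_op (\<tau>!z) = R" using op_R by simp
      have zN: "z < length \<tau>" "ev_loc (\<tau>!z) = j" using z unfolding Lset_def by auto
      have r: "f a < f z \<and> (\<forall>w\<in>Lw \<tau> j. f w < f z \<longrightarrow> f w \<le> f a)"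
        using serial_read(2)[OF bij ser un zN(1) zR zN(2) a] d by simp
      have "f w \<noteq> f z" if "w \<in> Lw \<tau> j" for w
      proof
        assume "f w = f z"
        then have "w = z" using injE LwN[OF that] zN by blast
        then show False using that zR unfolding Lw_def by auto
      qed
      then show ?thesis using r by fastforce
    qed
    have sub: "constraint_edges n m \<Omega> \<tau> \<subseteq> {(a,b). f a < f b}"
    proof
      fix e assume "e \<in> constraint_edges n m \<Omega> \<tau>"
      then consider i where "e \<in> Mrel \<tau> i" | j where "e \<in> Omega_e \<Omega> \<tau> j"
        unfolding constraint_edges_def by blast
      then show "e \<in> {(a,b). f a < f b}"
      proof cases
        case 1 then show ?thesis using M by (cases e) auto
      next
        case 2
        obtain x y where e: "e = (x, y)" by (cases e)
        have xL: "x \<in> Lset \<tau> j" and yL: "y \<in> Lset \<tau> j" using 2 e unfolding Omega_e_def by auto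
        have xN: "x < length \<tau>" "ev_loc (\<tau>!x) = j" using xL unfolding Lset_def by auto
        have yN: "y < length \<tau>" "ev_loc (\<tau>!y) = j" using yL unfolding Lset_def by auto
        have "(ev_data (\<tau> ! x) = ev_data (\<tau> ! y) \<and> ev_op (\<tau> ! x) = W \<and> ev_op (\<tau> ! y) = R)
          \<or> (ev_data (\<tau> ! x) = 0 \<and> ev_data (\<tau> ! y) \<noteq> 0)
          \<or> (\<exists>a\<in>Lw \<tau> j. \<exists>b\<in>Lw \<tau> j. (a, b) \<in> \<Omega> \<tau> j \<and>
              ev_data (\<tau> ! a) = ev_data (\<tau> ! x) \<and> ev_data (\<tau> ! b) = ev_data (\<tau> ! y))"
          using 2 e unfolding Omega_e_def by auto
        then consider (c1) "ev_data (\<tau> ! x) = ev_data (\<tau> ! y)" "ev_op (\<tau> ! x) = W" "ev_op (\<tau> ! y) = R"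
          | (c2) "ev_data (\<tau> ! x) = 0" "ev_data (\<tau> ! y) \<noteq> 0"
          | (c3) a b where "a \<in> Lw \<tau> j" "b \<in> Lw \<tau> j" "(a, b) \<in> \<Omega> \<tau> j"
              "ev_data (\<tau> ! a) = ev_data (\<tau> ! x)" "ev_data (\<tau> ! b) = ev_data (\<tau> ! y)"
          by (elim disjE bexE conjE) auto
        then have "f x < f y"
        proof cases
          case c1
          have xW: "x \<in> Lw \<tau> j" using xL c1 unfolding Lw_def by simp
          have "f x \<le> f y" using Pz[OF yL xW] c1 by simp
          moreover have "x \<noteq> y" using c1 by auto
          moreover have "f x \<noteq> f y" using injE xN(1) yN(1) \<open>x \<noteq> y\<close> by blast
          ultimately show ?thesis by simp
        next
          case c2
          have "ev_op (\<tau>!x) \<noteq> W"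
          proof
            assume "ev_op (\<tau>!x) = W"
            then have "x \<in> Lw \<tau> j" using xL unfolding Lw_def by simp
            then show False using unamb_nz[OF un] c2 by blast
          qed
          then have xR: "ev_op (\<tau>!x) = R" using op_R by simp
          have allw: "\<forall>w\<in>Lw \<tau> j. f x < f w"
            using serial_read(1)[OF bij ser un xN(1) xR xN(2)] c2 by simp
          show ?thesis
          proof (cases "ev_op (\<tau>!y) = W")
            case True
            then have "y \<in> Lw \<tau> j" using yL unfolding Lw_def by simp
            then show ?thesis using allw by blast
          next
            case False
            then have "y \<in> Lr \<tau> j" using yL op_R unfolding Lr_def by simp
            then have "ev_data (\<tau>!y) = 0 \<or> (\<exists>b\<in>Lw \<tau> j. ev_data (\<tau>!y) = ev_data (\<tau>!b))"
              using cs by blast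
            then obtain b where b: "b \<in> Lw \<tau> j" "ev_data (\<tau>!y) = ev_data (\<tau>!b)"
              using c2(2) by (elim disjE bexE) auto
            have "f b \<le> f y" using Pz[OF yL b(1)] b(2) by simp
            then show ?thesis using allw b(1) by fastforce
          qed
        next
          case c3
          have ab: "f a < f b" using c3(3) unfolding \<Omega>_def f_def by simp
          have px: "f a \<le> f x \<and> (\<forall>w\<in>Lw \<tau> j. f w \<le> f x \<longrightarrow> f w \<le> f a)"
            using Pz[OF xL c3(1)] c3(4) by simp
          have py: "f b \<le> f y" using Pz[OF yL c3(2)] c3(5) by simp
          show ?thesis
          proof (rule ccontr)
            assume "\<not> f x < f y"
            then have "f b \<le> f x" using py by simp
            then have "f b \<le> f a" using px c3(2) by blast
            then show False using ab by simp
          qed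
        qed
        then show ?thesis using e by simp
      qed
    qed
    have "acyclic {(a,b). f a < f (b::nat)}"
    proof -
      have "trans {(a,b). f a < f (b::nat)}" unfolding trans_def by auto
      then show ?thesis unfolding acyclic_def by simp
    qed
    then show ?thesis using acyclic_subset sub by blast
  qed
  then show "\<exists>\<Omega>. witness (S n m v) \<Omega> \<and>
              (\<forall>\<tau>\<in>traces (S n m v). unambiguous \<tau> \<longrightarrow> acyclic (constraint_edges n m \<Omega> \<tau>))"
    using wit by blast
  }
  {
  assume "\<exists>\<Omega>. witness (S n m v) \<Omega> \<and>
              (\<forall>\<tau>\<in>traces (S n m v). unambiguous \<tau> \<longrightarrow> acyclic (constraint_edges n m \<Omega> \<tau>))"
  then obtain \<Omega> where wit: "witness (S n m v) \<Omega>"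
    and ac: "\<forall>\<tau>\<in>traces (S n m v). unambiguous \<tau> \<longrightarrow> acyclic (constraint_edges n m \<Omega> \<tau>)" by blast
  show "\<forall>\<tau>\<in>traces (S n m v). unambiguous \<tau> \<longrightarrow> seq_consistent \<tau>"
  proof (intro ballI impI)
    fix \<tau> assume tr: "\<tau> \<in> traces (S n m v)" and un: "unambiguous \<tau>"
    define E where "E = constraint_edges n m \<Omega> \<tau>"
    have acE: "acyclic E" using ac tr un E_def by blast
    have Esub: "E \<subseteq> {..<length \<tau>} \<times> {..<length \<tau>}"
      unfolding E_def constraint_edges_def Mrel_def Pset_def Omega_e_def Lset_def by auto
    obtain f where bij: "bij_betw f {..<length \<tau>} {..<length \<tau>}" and fE: "\<And>a b. (a,b) \<in> E \<Longrightarrow> f a < f b"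
      using linext[OF acE Esub] by blast
    have ev: "ev_proc (\<tau>!k) \<in> {1..n} \<and> ev_loc (\<tau>!k) \<in> {1..m}" if "k < length \<tau>" for k
      using trace_ev[OF assms(1) assms(3-5) tr that] by simp
    have Mo: "\<forall>i u w. (u, w) \<in> Mrel \<tau> i \<longrightarrow> f u < f w"
    proof (intro allI impI)
      fix i u w assume uw: "(u, w) \<in> Mrel \<tau> i"
      then have "u < length \<tau>" "ev_proc (\<tau>!u) = i" unfolding Mrel_def Pset_def by auto
      then have "i \<in> {1..n}" using ev by blast
      then have "(u, w) \<in> E" using uw unfolding E_def constraint_edges_def by blast
      then show "f u < f w" by (rule fE)
    qed
    have tot: "\<forall>j. strict_total_on (Lw \<tau> j) (\<Omega> \<tau> j)" using wit tr unfolding witness_def by blast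
    have ser: "serial (map (\<lambda>p. \<tau> ! the_inv_into {..<length \<tau>} f p) [0..<length \<tau>])"
    proof (rule serial_from_order[where \<Omega>=\<Omega> and \<tau>=\<tau> and f=f, OF bij un caus[OF tr] tot])
      fix a b assume a: "a < length \<tau>" and ab: "(a, b) \<in> Omega_e \<Omega> \<tau> (ev_loc (\<tau> ! a))"
      have "ev_loc (\<tau> ! a) \<in> {1..m}" using ev a by blast
      then have "(a, b) \<in> E" using ab unfolding E_def constraint_edges_def by blast
      then show "f a < f b" by (rule fE)
    qed
    show "seq_consistent \<tau>" unfolding seq_consistent_def using bij Mo ser by blast
  qed
  }
qed

end
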